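(* For $k\in\mathbb Z\setminus\{0\}$: (i) if $\alpha\in(0,1)$, then $(2-2^{\alpha-1})^{-1}<c^-(k)+c^+(k)\le1$; (ii) if $\alpha\in(1,2)$, then $1\le c^-(k)+c^+(k)\le(2-2^{\alpha-1})^{-1}$.
   Context: $B_\alpha$ is fractional Brownian motion with $\mathrm{Cov}(B_\alpha(t),B_\alpha(s))=\frac{|t|^\alpha+|s|^\alpha-|t-s|^\alpha}{2}$, $\alpha\in(0,2)$; $Z_\alpha(t)=\sqrt2B_\alpha(t)-|t|^\alpha$. Let $\Sigma=\begin{pmatrix}2&2-2^\alpha\\2-2^\alpha&2\end{pmatrix}$ be the covariance matrix of $(Z_\alpha(-1),Z_\alpha(1))$. For $k\in\mathbb Z$, define $(c^-(k),c^+(k))^\top=\Sigma^{-1}\big(\mathrm{Cov}(Z_\alpha(k),Z_\alpha(-1)),\mathrm{Cov}(Z_\alpha(k),Z_\alpha(1))\big)^\top$. (Equivalently, $c^-(k)+c^+(k)=\frac{2+2|k|^\alpha-(|k|-1)^\alpha-(|k|+1)^\alpha}{4-2^\alpha}$ for $k\ne0$.) *)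

theory Defs
  imports Complex_Main
begin

text \<open>Covariance of Z_alpha(t) = sqrt 2 * B_alpha(t) - |t|^alpha, where B_alpha is
  fractional Brownian motion: Cov(Z(t),Z(s)) = 2 Cov(B(t),B(s)) = |t|^a + |s|^a - |t-s|^a.\<close>
definition covZ :: "real \<Rightarrow> real \<Rightarrow> real \<Rightarrow> real" where
  "covZ a t s = \<bar>t\<bar> powr a + \<bar>s\<bar> powr a - \<bar>t - s\<bar> powr a"

definition Sig11 :: "real \<Rightarrow> real" where "Sig11 a = covZ a (-1) (-1)"
definition Sig12 :: "real \<Rightarrow> real" where "Sig12 a = covZ a (-1) 1"
definition Sig21 :: "real \<Rightarrow> real" where "Sig21 a = covZ a 1 (-1)"
definition Sig22 :: "real \<Rightarrow> real" where "Sig22 a = covZ a 1 1"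
definition Sigdet :: "real \<Rightarrow> real" where
  "Sigdet a = Sig11 a * Sig22 a - Sig12 a * Sig21 a"

text \<open>(c^-(k), c^+(k))^T = Sigma^{-1} (Cov(Z(k),Z(-1)), Cov(Z(k),Z(1)))^T,
  with the 2x2 inverse written out explicitly.\<close>
definition c_minus :: "real \<Rightarrow> int \<Rightarrow> real" where
  "c_minus a k = (Sig22 a * covZ a (of_int k) (-1) - Sig12 a * covZ a (of_int k) 1) / Sigdet a"
definition c_plus :: "real \<Rightarrow> int \<Rightarrow> real" where
  "c_plus a k = (- Sig21 a * covZ a (of_int k) (-1) + Sig11 a * covZ a (of_int k) 1) / Sigdet a"

end

theory Submission
  imports Defs
begin

lemma mvt_pow:
  fixes u v b :: real
  assumes "0 < u" "u < v"
  shows "\<exists>z. u < z \<and> z < v \<and> v powr b - u powr b = (v - u) * (b * z powr (b - 1))"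
proof -
  have "\<And>t. u \<le> t \<Longrightarrow> t \<le> v \<Longrightarrow> ((\<lambda>t. t powr b) has_real_derivative b * t powr (b - 1)) (at t)"
    using assms by (auto intro!: has_real_derivative_powr)
  from MVT2[OF assms(2) this] show ?thesis by auto
qed

lemma sd_diff:
  fixes x b :: real
  assumes "x > 1"
  obtains p q where "x - 1 < p" "p < x" "x < q" "q < x + 1"
    "(x+1) powr b - 2 * x powr b + (x-1) powr b = b * q powr (b-1) - b * p powr (b-1)"
proof -
  obtain q where q: "x < q" "q < x+1" "(x+1) powr b - x powr b = (x+1-x) * (b * q powr (b-1))"
    using mvt_pow[of x "x+1" b] assms by auto
  obtain p where p: "x-1 < p" "p < x" "x powr b - (x-1) powr b = (x-(x-1)) * (b * p powr (b-1))"
    using mvt_pow[of "x-1" x b] assms by auto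
  show ?thesis using that[OF p(1,2) q(1,2)] p(3) q(3) by (simp add: algebra_simps)
qed

lemma sd_neg:
  fixes x b :: real
  assumes "x > 1" "0 < b" "b < 1"
  shows "(x+1) powr b - 2 * x powr b + (x-1) powr b < 0"
proof -
  obtain p q where pq: "x - 1 < p" "p < x" "x < q" "q < x + 1"
    "(x+1) powr b - 2 * x powr b + (x-1) powr b = b * q powr (b-1) - b * p powr (b-1)"
    using sd_diff[OF assms(1)] by blast
  have "q powr (b-1) < p powr (b-1)"
    using pq assms by (intro powr_less_mono2_neg) auto
  then show ?thesis using pq(5) assms by (simp add: mult_strict_left_mono)
qed

lemma sd_pos:
  fixes x b :: real
  assumes "x > 1" "b < 0 \<or> b > 1"
  shows "(x+1) powr b - 2 * x powr b + (x-1) powr b > 0"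
proof -
  obtain p q where pq: "x - 1 < p" "p < x" "x < q" "q < x + 1"
    "(x+1) powr b - 2 * x powr b + (x-1) powr b = b * q powr (b-1) - b * p powr (b-1)"
    using sd_diff[OF assms(1)] by blast
  show ?thesis
  proof (cases "b < 0")
    case True
    have "q powr (b-1) < p powr (b-1)"
      using pq True assms by (intro powr_less_mono2_neg) auto
    then show ?thesis using pq(5) True by (simp add: mult_strict_left_mono_neg)
  next
    case False
    then have "b > 1" using assms by auto
    have "p powr (b-1) < q powr (b-1)"
      using pq \<open>b>1\<close> assms by (intro powr_less_mono2) auto
    then show ?thesis using pq(5) \<open>b>1\<close> by (simp add: mult_strict_left_mono)
  qed
qed

definition phi :: "real \<Rightarrow> real \<Rightarrow> real" where
  "phi a x = (x+1) powr a - 2 * x powr a + (x-1) powr a"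

lemma phi_deriv:
  fixes a t :: real
  assumes "t > 1"
  shows "(phi a has_real_derivative a * ((t+1) powr (a-1) - 2 * t powr (a-1) + (t-1) powr (a-1))) (at t)"
proof -
  have "((\<lambda>t. (t+1) powr a) has_real_derivative a * (t+1) powr (a-1) * 1) (at t)"
    by (rule DERIV_chain2[OF has_real_derivative_powr]) (use assms in \<open>auto intro!: derivative_eq_intros\<close>)
  then have d1: "((\<lambda>t. (t+1) powr a) has_real_derivative a * (t+1) powr (a-1)) (at t)" by simp
  have "((\<lambda>t. (t-1) powr a) has_real_derivative a * (t-1) powr (a-1) * 1) (at t)"
    by (rule DERIV_chain2[OF has_real_derivative_powr]) (use assms in \<open>auto intro!: derivative_eq_intros\<close>)
  then have d2: "((\<lambda>t. (t-1) powr a) has_real_derivative a * (t-1) powr (a-1)) (at t)" by simp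
  have d3: "((\<lambda>t. t powr a) has_real_derivative a * t powr (a-1)) (at t)"
    using has_real_derivative_powr[of t a] assms by auto
  have "((\<lambda>t. (t+1) powr a - 2 * t powr a + (t-1) powr a) has_real_derivative
     a * (t+1) powr (a-1) - 2 * (a * t powr (a-1)) + a * (t-1) powr (a-1)) (at t)"
    by (intro DERIV_add DERIV_diff DERIV_cmult d1 d2 d3)
  then show ?thesis unfolding phi_def[abs_def] by (simp add: algebra_simps)
qed

lemma phi_cont:
  fixes a x :: real
  assumes "a > 0"
  shows "continuous_on {1..x} (phi a)"
  unfolding phi_def[abs_def] using assms
  by (intro continuous_intros continuous_on_powr') auto

lemma phi_1: "a > 0 \<Longrightarrow> phi a 1 = 2 powr a - 2"
  by (simp add: phi_def)

lemma phi_mono1: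
  fixes a x :: real
  assumes "0 < a" "a < 1" "1 \<le> x"
  shows "phi a 1 \<le> phi a x"
proof (rule DERIV_nonneg_imp_increasing_open[OF assms(3)])
  fix t :: real assume t: "1 < t" "t < x"
  have "(t+1) powr (a-1) - 2 * t powr (a-1) + (t-1) powr (a-1) > 0"
    using sd_pos[of t "a-1"] t assms by auto
  then show "\<exists>y. DERIV (phi a) t :> y \<and> y \<ge> 0"
    using phi_deriv[of t a] t assms by (intro exI[of _ "a * ((t+1) powr (a-1) - 2 * t powr (a-1) + (t-1) powr (a-1))"]) auto
qed (use phi_cont assms in auto)

lemma phi_mono2:
  fixes a x :: real
  assumes "1 < a" "a < 2" "1 \<le> x"
  shows "phi a x \<le> phi a 1"
proof (rule DERIV_nonpos_imp_decreasing_open[OF assms(3)])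
  fix t :: real assume t: "1 < t" "t < x"
  have "(t+1) powr (a-1) - 2 * t powr (a-1) + (t-1) powr (a-1) < 0"
    using sd_neg[of t "a-1"] t assms by auto
  then show "\<exists>y. DERIV (phi a) t :> y \<and> y \<le> 0"
    using phi_deriv[of t a] t assms
    by (intro exI[of _ "a * ((t+1) powr (a-1) - 2 * t powr (a-1) + (t-1) powr (a-1))"])
       (auto intro: mult_nonneg_nonpos)
qed (use phi_cont assms in auto)

lemma phi_neg:
  fixes a x :: real
  assumes "0 < a" "a < 1" "1 \<le> x"
  shows "phi a x < 0"
proof (cases "x = 1")
  case True
  have "2 powr a < 2 powr (1::real)" using assms by (intro powr_less_mono) auto
  then show ?thesis using True assms phi_1[of a] by simp
next
  case False
  then show ?thesis using sd_neg[of x a] assms unfolding phi_def by auto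
qed

lemma phi_pos:
  fixes a x :: real
  assumes "1 < a" "1 \<le> x"
  shows "phi a x \<ge> 0"
proof (cases "x = 1")
  case True
  have "2 powr (1::real) < 2 powr a" using assms by (intro powr_less_mono) auto
  then show ?thesis using True assms phi_1[of a] by simp
next
  case False
  then show ?thesis using sd_pos[of x a] assms unfolding phi_def by auto
qed

lemma csum:
  fixes a :: real and k :: int
  assumes "k \<noteq> 0" "0 < a" "a < 2"
  shows "c_minus a k + c_plus a k = (2 - phi a \<bar>real_of_int k\<bar>) / (4 - 2 powr a)"
proof -
  define A where "A = (2::real) powr a"
  define n where "n = \<bar>real_of_int k\<bar>"
  have n1: "n \<ge> 1" using assms(1) unfolding n_def by linarith
  have A0: "A > 0" unfolding A_def by simp
  have A4: "A < 4"
  proof -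
    have "2 powr a < 2 powr (2::real)" using assms by (intro powr_less_mono) auto
    then show ?thesis unfolding A_def by simp
  qed
  have S11: "Sig11 a = 2" "Sig22 a = 2" "Sig12 a = 2 - A" "Sig21 a = 2 - A"
    using assms by (simp_all add: Sig11_def Sig22_def Sig12_def Sig21_def covZ_def A_def)
  have det: "Sigdet a = A * (4 - A)" unfolding Sigdet_def S11 by (simp add: algebra_simps power2_eq_square)
  have key: "\<bar>real_of_int k + 1\<bar> powr a + \<bar>real_of_int k - 1\<bar> powr a = (n+1) powr a + (n-1) powr a"
  proof (cases "k > 0")
    case True
    then have "\<bar>real_of_int k + 1\<bar> = n + 1" "\<bar>real_of_int k - 1\<bar> = n - 1" unfolding n_def by auto
    then show ?thesis by simp
  next
    case False
    then have "\<bar>real_of_int k + 1\<bar> = n - 1" "\<bar>real_of_int k - 1\<bar> = n + 1" using assms(1) unfolding n_def by auto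
    then show ?thesis by simp
  qed
  have "c_minus a k + c_plus a k = (A * (covZ a (of_int k) (-1) + covZ a (of_int k) 1)) / (A * (4 - A))"
    unfolding c_minus_def c_plus_def S11 det by (simp add: add_divide_distrib[symmetric] algebra_simps)
  also have "\<dots> = (covZ a (of_int k) (-1) + covZ a (of_int k) 1) / (4 - A)"
    using A0 by simp
  also have "covZ a (of_int k) (-1) + covZ a (of_int k) 1 = 2 - phi a n"
    using key unfolding covZ_def phi_def n_def by (simp add: algebra_simps)
  finally show ?thesis unfolding A_def n_def .
qed

theorem lemma3p7:
  fixes a :: real and k :: int
  assumes "k \<noteq> 0"
  shows "(0 < a \<and> a < 1 \<longrightarrow>
            1 / (2 - 2 powr (a - 1)) < c_minus a k + c_plus a k \<and> c_minus a k + c_plus a k \<le> 1)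
       \<and> (1 < a \<and> a < 2 \<longrightarrow>
            1 \<le> c_minus a k + c_plus a k \<and> c_minus a k + c_plus a k \<le> 1 / (2 - 2 powr (a - 1)))"
proof -
  define A where "A = (2::real) powr a"
  define n where "n = \<bar>real_of_int k\<bar>"
  have n1: "n \<ge> 1" using assms(1) unfolding n_def by linarith
  have h: "1 / (2 - 2 powr (a - 1)) = 2 / (4 - A)"
    unfolding A_def by (simp add: powr_diff field_simps)
  show ?thesis
  proof (intro conjI impI; elim conjE)
    assume a: "0 < a" "a < 1"
    have A4: "A < 4"
    proof -
      have "2 powr a < 2 powr (2::real)" using a by (intro powr_less_mono) auto
      then show ?thesis unfolding A_def by simp
    qed
    have cs: "c_minus a k + c_plus a k = (2 - phi a n) / (4 - A)"
      using csum[of k a] assms a unfolding A_def n_def by simp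
    have p1: "phi a n < 0" using phi_neg[OF a n1] .
    have p2: "A - 2 \<le> phi a n" using phi_mono1[OF a n1] phi_1[of a] a unfolding A_def by simp
    show "1 / (2 - 2 powr (a - 1)) < c_minus a k + c_plus a k"
      unfolding h cs using A4 p1 by (simp add: divide_strict_right_mono)
    show "c_minus a k + c_plus a k \<le> 1"
      unfolding cs using A4 p2 by simp
  next
    assume a: "1 < a" "a < 2"
    have A4: "A < 4"
    proof -
      have "2 powr a < 2 powr (2::real)" using a by (intro powr_less_mono) auto
      then show ?thesis unfolding A_def by simp
    qed
    have cs: "c_minus a k + c_plus a k = (2 - phi a n) / (4 - A)"
      using csum[of k a] assms a unfolding A_def n_def by simp
    have p1: "phi a n \<ge> 0" using phi_pos[OF a(1) n1] .
    have p2: "phi a n \<le> A - 2" using phi_mono2[OF a n1] phi_1[of a] a unfolding A_def by simp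
    show "1 \<le> c_minus a k + c_plus a k"
      unfolding cs using A4 p2 by simp
    show "c_minus a k + c_plus a k \<le> 1 / (2 - 2 powr (a - 1))"
      unfolding h cs using A4 p1 by (simp add: divide_right_mono)
  qed
qed

end
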